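(* Let $(M,J,g)$ be a $(J^2=\pm1)$-metric manifold with $\alpha\varepsilon=-1$. The following are equivalent: (i) $\widetilde N_J^{-1}=0$; (ii) $(\nabla^g_X\Phi)(Y,Z)-\alpha(\nabla^g_{JX}\Phi)(JY,Z)=0$ for all $X,Y,Z$; (iii) $(\nabla^g_XJ)Y-\alpha(\nabla^g_{JX}J)JY=0$ for all $X,Y$; (iv) $(M,J,g)$ is of quasi-Kähler type, i.e. $(\nabla^g_XJ)JY-(\nabla^g_{JX}J)Y=0$ for all $X,Y$; (v) $(\nabla^g_XJ)X-\alpha(\nabla^g_{JX}J)JX=0$ for all $X$.
   Context: A $(J^2=\pm1)$-metric manifold $(M,J,g)$ is a smooth manifold $M$ with a semi-Riemannian metric $g$ and a $(1,1)$-tensor field $J$ such that $J^2=\alpha\,\mathrm{Id}$, $\mathrm{trace}\,J=0$, $g(JX,JY)=\varepsilon g(X,Y)$ for all vector fields, where $\alpha,\varepsilon\in\{-1,1\}$, and $g$ is Riemannian when $\varepsilon=1$. $\nabla^g$ is the Levi-Civita connection; $\Phi(X,Y)=g(JX,Y)$ is the fundamental tensor. The second Nijenhuis tensor is $\widetilde N_J^{\alpha\varepsilon}(X,Y)=(\nabla^g_XJ)JY+\alpha\varepsilon\big((\nabla^g_{JX}J)Y+(\nabla^g_YJ)JX\big)+(\nabla^g_{JY}J)X$; for $\alpha\varepsilon=-1$ it is denoted $\widetilde N_J^{-1}$. *)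

theory Defs
  imports Complex_Main
begin

text \<open>
Algebraic (coordinate-free) model of a semi-Riemannian manifold, as used in
Koszul-style differential geometry:
  'f : the commutative real algebra of smooth functions C^\<infinity>(M);
  'x : the C^\<infinity>(M)-module of smooth vector fields, with scalar multiplication sc;
  der X f : the derivative X(f) of a function along a vector field;
  br X Y : the Lie bracket [X,Y];
  g : the metric (symmetric, C^\<infinity>(M)-bilinear, nondegenerate);
  J : a (1,1)-tensor field, i.e. a C^\<infinity>(M)-linear endomorphism of vector fields;
  nabla X Y : a covariant derivative nabla_X Y.
\<close>

definition Jpm_metric_manifold ::
  "('f::{comm_ring_1,real_algebra_1} \<Rightarrow> 'x::ab_group_add \<Rightarrow> 'x) \<Rightarrow> ('x \<Rightarrow> 'f \<Rightarrow> 'f)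
   \<Rightarrow> ('x \<Rightarrow> 'x \<Rightarrow> 'x) \<Rightarrow> ('x \<Rightarrow> 'x \<Rightarrow> 'f) \<Rightarrow> ('x \<Rightarrow> 'x) \<Rightarrow> real \<Rightarrow> real \<Rightarrow> bool" where
  "Jpm_metric_manifold sc der br g J \<alpha> \<epsilon> \<longleftrightarrow>
     module sc \<and>
     \<comment> \<open>vector fields act on functions as derivations, C^\<infinity>(M)-linearly in the field\<close>
     (\<forall>X f h. der X (f + h) = der X f + der X h) \<and>
     (\<forall>X f h. der X (f * h) = f * der X h + h * der X f) \<and>
     (\<forall>X c. der X (of_real c) = 0) \<and>
     (\<forall>X Y f. der (X + Y) f = der X f + der Y f) \<and>
     (\<forall>a X f. der (sc a X) f = a * der X f) \<and>
     \<comment> \<open>Lie bracket\<close>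
     (\<forall>X Y f. der (br X Y) f = der X (der Y f) - der Y (der X f)) \<and>
     \<comment> \<open>semi-Riemannian metric\<close>
     (\<forall>X Y. g X Y = g Y X) \<and>
     (\<forall>X Y Z. g (X + Y) Z = g X Z + g Y Z) \<and>
     (\<forall>a X Y. g (sc a X) Y = a * g X Y) \<and>
     (\<forall>X. (\<forall>Y. g X Y = 0) \<longrightarrow> X = 0) \<and>
     \<comment> \<open>(1,1)-tensor field J with J^2 = \<alpha> Id and g(JX,JY) = \<epsilon> g(X,Y)\<close>
     (\<forall>X Y. J (X + Y) = J X + J Y) \<and>
     (\<forall>a X. J (sc a X) = sc a (J X)) \<and>
     (\<forall>X. J (J X) = sc (of_real \<alpha>) X) \<and>
     (\<forall>X Y. g (J X) (J Y) = of_real \<epsilon> * g X Y) \<and>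
     (\<alpha> = 1 \<or> \<alpha> = -1) \<and> (\<epsilon> = 1 \<or> \<epsilon> = -1)"

text \<open>nabla is the Levi-Civita connection of g: an affine connection that is
torsion-free and metric (this characterizes it uniquely, by the Koszul formula).\<close>

definition levi_civita ::
  "('f::{comm_ring_1,real_algebra_1} \<Rightarrow> 'x::ab_group_add \<Rightarrow> 'x) \<Rightarrow> ('x \<Rightarrow> 'f \<Rightarrow> 'f)
   \<Rightarrow> ('x \<Rightarrow> 'x \<Rightarrow> 'x) \<Rightarrow> ('x \<Rightarrow> 'x \<Rightarrow> 'f) \<Rightarrow> ('x \<Rightarrow> 'x \<Rightarrow> 'x) \<Rightarrow> bool" where
  "levi_civita sc der br g nabla \<longleftrightarrow>
     (\<forall>X1 X2 Y. nabla (X1 + X2) Y = nabla X1 Y + nabla X2 Y) \<and>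
     (\<forall>a X Y. nabla (sc a X) Y = sc a (nabla X Y)) \<and>
     (\<forall>X Y1 Y2. nabla X (Y1 + Y2) = nabla X Y1 + nabla X Y2) \<and>
     (\<forall>X a Y. nabla X (sc a Y) = sc (der X a) Y + sc a (nabla X Y)) \<and>
     (\<forall>X Y. nabla X Y - nabla Y X = br X Y) \<and>
     (\<forall>X Y Z. der X (g Y Z) = g (nabla X Y) Z + g Y (nabla X Z))"

definition nablaJ :: "('x \<Rightarrow> 'x \<Rightarrow> 'x::ab_group_add) \<Rightarrow> ('x \<Rightarrow> 'x) \<Rightarrow> 'x \<Rightarrow> 'x \<Rightarrow> 'x" where
  "nablaJ nabla J X Y = nabla X (J Y) - J (nabla X Y)"

definition fundPhi :: "('x \<Rightarrow> 'x \<Rightarrow> 'f) \<Rightarrow> ('x \<Rightarrow> 'x) \<Rightarrow> 'x \<Rightarrow> 'x \<Rightarrow> 'f" where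
  "fundPhi g J X Y = g (J X) Y"

definition nablaPhi ::
  "('x \<Rightarrow> 'f::ab_group_add \<Rightarrow> 'f) \<Rightarrow> ('x \<Rightarrow> 'x \<Rightarrow> 'x) \<Rightarrow> ('x \<Rightarrow> 'x \<Rightarrow> 'f) \<Rightarrow> ('x \<Rightarrow> 'x)
   \<Rightarrow> 'x \<Rightarrow> 'x \<Rightarrow> 'x \<Rightarrow> 'f" where
  "nablaPhi der nabla g J X Y Z =
     der X (fundPhi g J Y Z) - fundPhi g J (nabla X Y) Z - fundPhi g J Y (nabla X Z)"

definition second_nijenhuis ::
  "('f::real_algebra_1 \<Rightarrow> 'x::ab_group_add \<Rightarrow> 'x) \<Rightarrow> ('x \<Rightarrow> 'x \<Rightarrow> 'x) \<Rightarrow> ('x \<Rightarrow> 'x) \<Rightarrow> real \<Rightarrow> real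
   \<Rightarrow> 'x \<Rightarrow> 'x \<Rightarrow> 'x" where
  "second_nijenhuis sc nabla J \<alpha> \<epsilon> X Y =
     nablaJ nabla J X (J Y)
     + sc (of_real (\<alpha> * \<epsilon>)) (nablaJ nabla J (J X) Y + nablaJ nabla J Y (J X))
     + nablaJ nabla J (J Y) X"

end

theory Submission
  imports Defs
begin

theorem mainTheorem7:
  fixes sc :: "'f::{comm_ring_1,real_algebra_1} \<Rightarrow> 'x::ab_group_add \<Rightarrow> 'x"
    and der :: "'x \<Rightarrow> 'f \<Rightarrow> 'f" and br :: "'x \<Rightarrow> 'x \<Rightarrow> 'x"
    and g :: "'x \<Rightarrow> 'x \<Rightarrow> 'f" and J :: "'x \<Rightarrow> 'x" and nabla :: "'x \<Rightarrow> 'x \<Rightarrow> 'x"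
    and \<alpha> \<epsilon> :: real
  assumes "Jpm_metric_manifold sc der br g J \<alpha> \<epsilon>"
    and "levi_civita sc der br g nabla"
    and "\<alpha> * \<epsilon> = -1"
  shows "((\<forall>X Y. second_nijenhuis sc nabla J \<alpha> \<epsilon> X Y = 0)
          \<longleftrightarrow> (\<forall>X Y Z. nablaPhi der nabla g J X Y Z
                         - of_real \<alpha> * nablaPhi der nabla g J (J X) (J Y) Z = 0))
       \<and> ((\<forall>X Y Z. nablaPhi der nabla g J X Y Z
                         - of_real \<alpha> * nablaPhi der nabla g J (J X) (J Y) Z = 0)
          \<longleftrightarrow> (\<forall>X Y. nablaJ nabla J X Y - sc (of_real \<alpha>) (nablaJ nabla J (J X) (J Y)) = 0))
       \<and> ((\<forall>X Y. nablaJ nabla J X Y - sc (of_real \<alpha>) (nablaJ nabla J (J X) (J Y)) = 0)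
          \<longleftrightarrow> (\<forall>X Y. nablaJ nabla J X (J Y) - nablaJ nabla J (J X) Y = 0))
       \<and> ((\<forall>X Y. nablaJ nabla J X (J Y) - nablaJ nabla J (J X) Y = 0)
          \<longleftrightarrow> (\<forall>X. nablaJ nabla J X X - sc (of_real \<alpha>) (nablaJ nabla J (J X) (J X)) = 0))"
proof -
  note M = assms(1)[unfolded Jpm_metric_manifold_def]
  note L = assms(2)[unfolded levi_civita_def]
  interpret m: module sc using M by blast
  define a where "a = (of_real \<alpha> :: 'f)"
  have aa[simp]: "a * a = 1" using M by (auto simp: a_def)
  have scaa[simp]: "sc a (sc a x) = x" for x using aa by simp
  have Jadd[simp]: "J (x + y) = J x + J y" for x y using M by blast
  have Jsc[simp]: "J (sc c x) = sc c (J x)" for c x using M by blast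
  have JJ[simp]: "J (J x) = sc a x" for x using M by (simp add: a_def)
  have J0[simp]: "J 0 = 0" using Jadd[of 0 0] by simp
  have Jminus[simp]: "J (- x) = - J x" for x
    using Jadd[of x "-x"] by (simp add: eq_neg_iff_add_eq_0 add.commute)
  have Jdiff[simp]: "J (x - y) = J x - J y" for x y
    using Jadd[of x "-y"] by simp
  have Jinj: "J x = 0 \<Longrightarrow> x = 0" for x
  proof -
    assume "J x = 0"
    hence "sc a x = 0" using JJ[of x] by simp
    hence "sc a (sc a x) = 0" by simp
    thus "x = 0" by simp
  qed
  have half: "x + x = 0 \<Longrightarrow> x = 0" for x :: 'x
  proof -
    assume h: "x + x = 0"
    have "sc (of_real (1/2)) (x + x) = sc (of_real (1/2) + of_real (1/2)) x"
      by (simp only: m.scale_right_distrib m.scale_left_distrib)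
    also have "of_real (1/2) + of_real (1/2) = (1::'f)"
      by (metis of_real_add of_real_1 field_sum_of_halves[of "1::real"])
    finally show "x = 0" using h by simp
  qed
  have nadd1[simp]: "nabla (X1 + X2) Y = nabla X1 Y + nabla X2 Y" for X1 X2 Y using L by blast
  have nsc1[simp]: "nabla (sc c X) Y = sc c (nabla X Y)" for c X Y using L by blast
  have nadd2[simp]: "nabla X (Y1 + Y2) = nabla X Y1 + nabla X Y2" for X Y1 Y2 using L by blast
  have nsc2: "nabla X (sc c Y) = sc (der X c) Y + sc c (nabla X Y)" for X c Y using L by blast
  have dera: "der X a = 0" for X using M by (simp add: a_def)
  have nsca[simp]: "nabla X (sc a Y) = sc a (nabla X Y)" for X Y by (simp add: nsc2 dera)
  define P where "P = nablaJ nabla J"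
  have Padd1[simp]: "P (X1 + X2) Y = P X1 Y + P X2 Y" for X1 X2 Y
    by (simp add: P_def nablaJ_def)
  have Psc1[simp]: "P (sc c X) Y = sc c (P X Y)" for c X Y
    by (simp add: P_def nablaJ_def m.scale_right_diff_distrib)
  have Padd2[simp]: "P X (Y1 + Y2) = P X Y1 + P X Y2" for X Y1 Y2
    by (simp add: P_def nablaJ_def)
  have Psc2[simp]: "P X (sc a Y) = sc a (P X Y)" for X Y
    by (simp add: P_def nablaJ_def m.scale_right_diff_distrib)
  have PJ[simp]: "P X (J Y) = - J (P X Y)" for X Y
    by (simp add: P_def nablaJ_def)
  define D where "D X Y = P X Y - sc a (P (J X) (J Y))" for X Y
  have DJ2: "D X (J Y) = - J (D X Y)" for X Y
    by (simp add: D_def m.scale_right_diff_distrib)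
  have DJ1: "D (J X) Y = J (D X Y)" for X Y
    by (simp add: D_def m.scale_right_diff_distrib)
  have Dadd1: "D (X1 + X2) Y = D X1 Y + D X2 Y" for X1 X2 Y
    by (simp add: D_def m.scale_right_distrib m.scale_right_diff_distrib algebra_simps)
  have Dadd2: "D X (Y1 + Y2) = D X Y1 + D X Y2" for X Y1 Y2
    by (simp add: D_def m.scale_right_distrib m.scale_right_diff_distrib algebra_simps)
  have iii: "(\<forall>X Y. nablaJ nabla J X Y - sc (of_real \<alpha>) (nablaJ nabla J (J X) (J Y)) = 0)
     \<longleftrightarrow> (\<forall>X Y. D X Y = 0)" by (simp add: D_def P_def a_def)
  have Beq: "nablaJ nabla J X (J Y) - nablaJ nabla J (J X) Y = - J (D X Y)" for X Y
  proof -
    have "D X (J Y) = nablaJ nabla J X (J Y) - nablaJ nabla J (J X) Y"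
      unfolding D_def by (simp add: P_def[symmetric])
    then show ?thesis using DJ2 by simp
  qed
  have iv: "(\<forall>X Y. nablaJ nabla J X (J Y) - nablaJ nabla J (J X) Y = 0) \<longleftrightarrow> (\<forall>X Y. D X Y = 0)"
    using Beq Jinj by (metis J0 neg_0_equal_iff_equal)
  have v: "(\<forall>X. nablaJ nabla J X X - sc (of_real \<alpha>) (nablaJ nabla J (J X) (J X)) = 0)
     \<longleftrightarrow> (\<forall>X. D X X = 0)" by (simp add: D_def P_def a_def)
  have vD: "(\<forall>X. D X X = 0) \<Longrightarrow> (\<forall>X Y. D X Y = 0)"
  proof (intro allI)
    fix X Y assume h: "\<forall>X. D X X = 0"
    have sk: "D U V + D V U = 0" for U V
      using h[rule_format, of "U + V"] h[rule_format, of U] h[rule_format, of V]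
      by (simp add: Dadd1 Dadd2 algebra_simps)
    have "D (J X) Y + D Y (J X) = 0" by (rule sk)
    hence "J (D X Y - D Y X) = 0" by (simp add: DJ1 DJ2)
    hence "D X Y - D Y X = 0" by (rule Jinj)
    hence "D X Y = D Y X" by simp
    hence "D X Y + D X Y = 0" using sk[of X Y] by simp
    thus "D X Y = 0" by (rule half)
  qed
  have aeps: "of_real (\<alpha> * \<epsilon>) = (-1::'f)" using assms(3) by simp
  have Neq: "second_nijenhuis sc nabla J \<alpha> \<epsilon> X Y = J (D Y X - D X Y)" for X Y
  proof -
    have "second_nijenhuis sc nabla J \<alpha> \<epsilon> X Y
        = (nablaJ nabla J X (J Y) - nablaJ nabla J (J X) Y)
          - (nablaJ nabla J Y (J X) - nablaJ nabla J (J Y) X)"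
      unfolding second_nijenhuis_def aeps by (simp add: algebra_simps)
    then show ?thesis using Beq[of X Y] Beq[of Y X] by simp
  qed
  have i: "(\<forall>X Y. second_nijenhuis sc nabla J \<alpha> \<epsilon> X Y = 0) \<longleftrightarrow> (\<forall>X Y. D X Y = 0)"
  proof
    assume h: "\<forall>X Y. second_nijenhuis sc nabla J \<alpha> \<epsilon> X Y = 0"
    have sym: "D U V = D V U" for U V
    proof -
      have "J (D U V - D V U) = 0" using h[rule_format, of V U] Neq[of V U] by simp
      hence "D U V - D V U = 0" by (rule Jinj)
      thus ?thesis by simp
    qed
    show "\<forall>X Y. D X Y = 0"
    proof (intro allI)
      fix X Y
      have "D (J X) Y = D Y (J X)" by (rule sym)
      hence "J (D X Y) = - J (D X Y)" by (simp add: DJ1 DJ2 sym[of X Y])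
      hence "J (D X Y + D X Y) = 0" by (simp add: eq_neg_iff_add_eq_0 add.commute)
      thus "D X Y = 0" using Jinj half by blast
    qed
  next
    assume "\<forall>X Y. D X Y = 0"
    thus "\<forall>X Y. second_nijenhuis sc nabla J \<alpha> \<epsilon> X Y = 0" by (simp add: Neq)
  qed
  have gsym: "g x y = g y x" for x y using M by blast
  have gadd[simp]: "g (x + y) z = g x z + g y z" for x y z using M by blast
  have gsc[simp]: "g (sc c x) y = c * g x y" for c x y using M by blast
  have g0[simp]: "g 0 z = 0" for z using gadd[of 0 0 z] by simp
  have gminus[simp]: "g (- x) z = - g x z" for x z
    using gadd[of x "-x" z] by (simp add: eq_neg_iff_add_eq_0 add.commute)
  have gdiff[simp]: "g (x - y) z = g x z - g y z" for x y z
    using gadd[of x "-y" z] by simp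
  have metric: "der X (g Y Z) = g (nabla X Y) Z + g Y (nabla X Z)" for X Y Z using L by blast
  have Phi: "nablaPhi der nabla g J X Y Z = g (P X Y) Z" for X Y Z
    by (simp add: nablaPhi_def fundPhi_def P_def nablaJ_def metric)
  have ii: "(\<forall>X Y Z. nablaPhi der nabla g J X Y Z
                         - of_real \<alpha> * nablaPhi der nabla g J (J X) (J Y) Z = 0)
      \<longleftrightarrow> (\<forall>X Y. D X Y = 0)"
  proof -
    have "nablaPhi der nabla g J X Y Z - of_real \<alpha> * nablaPhi der nabla g J (J X) (J Y) Z
          = g (D X Y) Z" for X Y Z
      by (simp add: Phi D_def a_def)
    moreover have "(\<forall>Z. g (D X Y) Z = 0) \<longleftrightarrow> D X Y = 0" for X Y
    proof
      assume "\<forall>Z. g (D X Y) Z = 0"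
      thus "D X Y = 0" using M by blast
    next
      assume "D X Y = 0"
      thus "\<forall>Z. g (D X Y) Z = 0" by simp
    qed
    ultimately show ?thesis by simp
  qed
  show ?thesis using i ii iii iv v vD by blast
qed

end
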